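(* Let $X$ be a real Banach space that is uniformly convex and uniformly smooth (hence reflexive), with norm dual $X^*$, and let $J:X\to X^*$ be its normalized duality map, with inverse $J^{-1}:X^*\to X$. Then the polar $K^\circ$ of every nonempty closed convex cone $K\subseteq X$ is convex if and only if, for every two-dimensional linear subspace $D^*\subseteq X^*$, the image $J^{-1}(D^* )$ is a two-dimensional linear subspace of $X$.
   Context: For a nonempty closed convex set $C\subseteq X$ the metric projection $P_C:X\to C$ is $P_Cx=\operatorname{argmin}\{\|x-c\|:c\in C\}$; in a uniformly convex, uniformly smooth Banach space it is well defined, single valued and continuous. A cone is a nonempty set $K$ with $\lambda x\in K$ for all $x\in K$, $\lambda\ge 0$; a convex cone additionally satisfies $x+y\in K$ for all $x,y\in K$. The polar of a closed convex cone $K$ is $K^\circ=\{x\in X: P_Kx=0\}$. The normalized duality map $J:X\to X^*$ is defined by $\langle Jx,x\rangle=\|Jx\|_{X^*}\|x\|=\|x\|^2=\|Jx\|_{X^*}^2$, where $\langle\cdot,\cdot\rangle$ is the duality pairing; in this setting $J$ is a well-defined, positively homogeneous (indeed odd and homogeneous) homeomorphism of $X$ onto $X^*$. *)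

theory Defs
  imports "HOL-Analysis.Analysis"
begin

definition uniformly_convex :: "'a::real_normed_vector itself \<Rightarrow> bool" where
  "uniformly_convex (TYPE('a)) \<longleftrightarrow>
     (\<forall>\<epsilon>>0. \<exists>\<delta>>0. \<forall>x y::'a. norm x \<le> 1 \<and> norm y \<le> 1 \<and> norm (x - y) \<ge> \<epsilon>
          \<longrightarrow> norm ((1/2) *\<^sub>R (x + y)) \<le> 1 - \<delta>)"

text \<open>Uniform smoothness: the modulus of smoothness rho satisfies rho(t)/t \<rightarrow> 0 as t \<rightarrow> 0+.\<close>
definition uniformly_smooth :: "'a::real_normed_vector itself \<Rightarrow> bool" where
  "uniformly_smooth (TYPE('a)) \<longleftrightarrow>
     (\<forall>\<epsilon>>0. \<exists>\<delta>>0. \<forall>t. 0 < t \<and> t \<le> \<delta> \<longrightarrow>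
        (\<forall>x y::'a. norm x = 1 \<and> norm y = t \<longrightarrow>
            (norm (x + y) + norm (x - y)) / 2 - 1 \<le> \<epsilon> * t))"

text \<open>Metric projection onto C (well defined and single valued in the setting of the paper).\<close>
definition metric_projection :: "'a::real_normed_vector set \<Rightarrow> 'a \<Rightarrow> 'a" where
  "metric_projection C x = (THE c. c \<in> C \<and> (\<forall>d\<in>C. norm (x - c) \<le> norm (x - d)))"

definition polar :: "'a::real_normed_vector set \<Rightarrow> 'a set" where
  "polar K = {x. metric_projection K x = 0}"

definition duality_map :: "'a::real_normed_vector \<Rightarrow> ('a \<Rightarrow>\<^sub>L real)" where
  "duality_map x = (SOME f. blinfun_apply f x = norm x ^ 2 \<and> norm f = norm x)"

end

theory Submission
  imports Defs
begin



lemma div_le_imp: "(r::real) > 0 \<Longrightarrow> a / r \<le> b \<Longrightarrow> a \<le> r * b"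
  by (simp add: pos_divide_le_eq mult.commute)
lemma div_less_imp: "(r::real) > 0 \<Longrightarrow> a / r < b \<Longrightarrow> a < r * b"
  by (simp add: pos_divide_less_eq mult.commute)
lemma norm_div1: "(r::real) > 0 \<Longrightarrow> norm ((1/r) *\<^sub>R (u::'a::real_normed_vector)) = norm u / r"
  by simp
lemma norm_div_le1: "(r::real) > 0 \<Longrightarrow> norm (u::'a::real_normed_vector) \<le> r \<Longrightarrow> norm ((1/r) *\<^sub>R u) \<le> 1"
  by (simp add: pos_divide_le_eq)

lemma ucD:
  assumes "uniformly_convex TYPE('a::real_normed_vector)" "e > 0"
  shows "\<exists>d>0. \<forall>x y::'a. norm x \<le> 1 \<and> norm y \<le> 1 \<and> norm (x - y) \<ge> e
          \<longrightarrow> norm ((1/2) *\<^sub>R (x + y)) \<le> 1 - d"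
  using assms unfolding uniformly_convex_def by blast

lemma sc_lemma:
  fixes u v :: "'a::real_normed_vector"
  assumes uc: "uniformly_convex TYPE('a)" and nu: "norm u \<le> r" and nv: "norm v \<le> r"
    and m: "r \<le> norm ((1/2) *\<^sub>R (u+v))"
  shows "u = v"
proof (rule ccontr)
  assume ne: "u \<noteq> v"
  have r: "r > 0"
  proof (rule ccontr)
    assume "\<not> r > 0"
    then have "norm u \<le> 0" "norm v \<le> 0" using nu nv by linarith+
    then have "u = 0" "v = 0" by auto
    then show False using ne by simp
  qed
  define e where "e = norm (u - v) / r"
  have e: "e > 0" using ne r by (simp add: e_def)
  from ucD[OF uc e] obtain d where d: "d > 0" and H0: "\<forall>x y::'a. norm x \<le> 1 \<and> norm y \<le> 1 \<and> norm (x - y) \<ge> e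
          \<longrightarrow> norm ((1/2) *\<^sub>R (x + y)) \<le> 1 - d" by blast
  note H = H0[rule_format, OF conjI, OF _ conjI]
  have a1: "norm ((1/r) *\<^sub>R u) \<le> 1" by (rule norm_div_le1[OF r nu])
  have a2: "norm ((1/r) *\<^sub>R v) \<le> 1" by (rule norm_div_le1[OF r nv])
  have a3: "norm ((1/r) *\<^sub>R u - (1/r) *\<^sub>R v) \<ge> e"
  proof -
    have "(1/r) *\<^sub>R u - (1/r) *\<^sub>R v = (1/r) *\<^sub>R (u - v)" by (simp add: algebra_simps)
    then show ?thesis using r by (simp add: e_def)
  qed
  have "norm ((1/2) *\<^sub>R ((1/r) *\<^sub>R u + (1/r) *\<^sub>R v)) \<le> 1 - d" using H[OF a1 a2 a3] .
  moreover have "(1/2) *\<^sub>R ((1/r) *\<^sub>R u + (1/r) *\<^sub>R v) = (1/r) *\<^sub>R ((1/2) *\<^sub>R (u+v))"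
    by (simp add: algebra_simps)
  ultimately have "norm ((1/2) *\<^sub>R (u+v)) / r \<le> 1 - d" using r by simp
  then have "norm ((1/2) *\<^sub>R (u+v)) \<le> r * (1 - d)" by (rule div_le_imp[OF r])
  moreover have "r * (1 - d) = r - r * d" by (simp add: algebra_simps)
  moreover have "r * d > 0" using r d by simp
  ultimately show False using m by linarith
qed

lemma uc_cauchy:
  fixes s :: "nat \<Rightarrow> 'a::real_normed_vector"
  assumes uc: "uniformly_convex TYPE('a)" and r: "r > 0"
    and H: "\<And>\<eta>. \<eta> > 0 \<Longrightarrow> \<exists>N. \<forall>m\<ge>N. \<forall>n\<ge>N. norm (s m) \<le> r + \<eta> \<and> norm (s n) \<le> r + \<eta>
               \<and> norm ((1/2) *\<^sub>R (s m + s n)) \<ge> r - \<eta>"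
  shows "Cauchy s"
  unfolding Cauchy_iff
proof (intro allI impI)
  fix e :: real assume e: "e > 0"
  define e' where "e' = e / (r + 1)"
  have e': "e' > 0" using e r by (simp add: e'_def)
  from ucD[OF uc e'] obtain d where d: "d > 0" and U0: "\<forall>x y::'a. norm x \<le> 1 \<and> norm y \<le> 1 \<and> norm (x - y) \<ge> e'
          \<longrightarrow> norm ((1/2) *\<^sub>R (x + y)) \<le> 1 - d" by blast
  note U = U0[rule_format, OF conjI, OF _ conjI]
  define \<eta> where "\<eta> = min 1 (r * d / 4)"
  have \<eta>: "\<eta> > 0" "\<eta> \<le> 1" "\<eta> \<le> r * d / 4" using r d by (auto simp: \<eta>_def)
  obtain N where N: "\<forall>m\<ge>N. \<forall>n\<ge>N. norm (s m) \<le> r + \<eta> \<and> norm (s n) \<le> r + \<eta>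
               \<and> norm ((1/2) *\<^sub>R (s m + s n)) \<ge> r - \<eta>" using H[OF \<eta>(1)] by blast
  show "\<exists>M. \<forall>m\<ge>M. \<forall>n\<ge>M. norm (s m - s n) < e"
  proof (intro exI allI impI)
    fix m n assume mn: "N \<le> m" "N \<le> n"
    define \<rho> where "\<rho> = r + \<eta>"
    have \<rho>: "\<rho> > 0" using r \<eta> by (simp add: \<rho>_def)
    have b1: "norm (s m) \<le> \<rho>" "norm (s n) \<le> \<rho>" and b2: "norm ((1/2) *\<^sub>R (s m + s n)) \<ge> r - \<eta>"
      using N mn by (auto simp: \<rho>_def)
    have a1: "norm ((1/\<rho>) *\<^sub>R s m) \<le> 1" using b1 \<rho> norm_div_le1 by blast
    have a2: "norm ((1/\<rho>) *\<^sub>R s n) \<le> 1" using b1 \<rho> norm_div_le1 by blast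
    have lt: "norm ((1/\<rho>) *\<^sub>R s m - (1/\<rho>) *\<^sub>R s n) < e'"
    proof (rule ccontr)
      assume "\<not> ?thesis"
      then have "norm ((1/2) *\<^sub>R ((1/\<rho>) *\<^sub>R s m + (1/\<rho>) *\<^sub>R s n)) \<le> 1 - d"
        using U[OF a1 a2] by simp
      moreover have "(1/2) *\<^sub>R ((1/\<rho>) *\<^sub>R s m + (1/\<rho>) *\<^sub>R s n) = (1/\<rho>) *\<^sub>R ((1/2) *\<^sub>R (s m + s n))"
        by (simp add: algebra_simps)
      ultimately have "norm ((1/2) *\<^sub>R (s m + s n)) / \<rho> \<le> 1 - d" using \<rho> by simp
      then have "norm ((1/2) *\<^sub>R (s m + s n)) \<le> \<rho> * (1 - d)" using \<rho> div_le_imp div_less_imp by blast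
      with b2 have "r - \<eta> \<le> (r + \<eta>) * (1 - d)" by (simp add: \<rho>_def)
      then have "r * d \<le> 2 * \<eta> - \<eta> * d" by (simp add: algebra_simps)
      moreover have "\<eta> * d \<ge> 0" using \<eta> d by simp
      moreover have "r * d > 0" using r d by simp
      ultimately show False using \<eta> by linarith
    qed
    have "(1/\<rho>) *\<^sub>R s m - (1/\<rho>) *\<^sub>R s n = (1/\<rho>) *\<^sub>R (s m - s n)" by (simp add: algebra_simps)
    with lt have "norm (s m - s n) / \<rho> < e'" using \<rho> by simp
    then have "norm (s m - s n) < \<rho> * e'" using \<rho> div_le_imp div_less_imp by blast
    also have "\<rho> * e' \<le> (r + 1) * e'" using \<eta> e' by (intro mult_right_mono) (auto simp: \<rho>_def)
    also have "\<dots> = e" using r by (simp add: e'_def)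
    finally show "norm (s m - s n) < e" .
  qed
qed

definition qd :: "'a::real_normed_vector \<Rightarrow> 'a \<Rightarrow> real \<Rightarrow> real" where
  "qd x w s = (norm (x + s *\<^sub>R w) - norm x) / s"

definition gd :: "'a::real_normed_vector \<Rightarrow> 'a \<Rightarrow> real" where
  "gd x w = Inf (qd x w ` {0<..})"

lemma qd_lower:
  assumes s: "s > 0" shows "- norm w \<le> qd x w s"
proof -
  have "norm x \<le> norm (x + s *\<^sub>R w) + norm (x - (x + s *\<^sub>R w))"
    by (rule norm_triangle_sub)
  then have "norm x \<le> norm (x + s *\<^sub>R w) + norm (s *\<^sub>R w)" by simp
  then have "- (s * norm w) \<le> norm (x + s *\<^sub>R w) - norm x" using s by simp
  then have "- norm w * s \<le> norm (x + s *\<^sub>R w) - norm x" by (simp add: mult.commute)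
  then show ?thesis using s by (simp add: qd_def pos_le_divide_eq)
qed

lemma qd_upper:
  assumes s: "s > 0" shows "qd x w s \<le> norm w"
proof -
  have "norm (x + s *\<^sub>R w) \<le> norm x + norm (s *\<^sub>R w)" by (rule norm_triangle_ineq)
  then have "norm (x + s *\<^sub>R w) - norm x \<le> s * norm w" using s by simp
  then have "norm (x + s *\<^sub>R w) - norm x \<le> norm w * s" by (simp add: mult.commute)
  then show ?thesis using s by (simp add: qd_def pos_divide_le_eq)
qed

lemma qd_mono:
  assumes s1: "0 < s1" and s12: "s1 \<le> s2" shows "qd x w s1 \<le> qd x w s2"
proof -
  define l where "l = s1 / s2"
  have s2: "s2 > 0" using s1 s12 by simp
  have l: "0 < l" "l \<le> 1" using s1 s2 s12 by (auto simp: l_def)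
  have ls: "l * s2 = s1" using s2 by (simp add: l_def)
  have eq0: "(1 - l) *\<^sub>R x + l *\<^sub>R (x + s2 *\<^sub>R w) = x + (l * s2) *\<^sub>R w"
    by (simp add: algebra_simps)
  have eq: "x + s1 *\<^sub>R w = (1 - l) *\<^sub>R x + l *\<^sub>R (x + s2 *\<^sub>R w)"
    unfolding eq0 ls ..
  have "norm (x + s1 *\<^sub>R w) \<le> norm ((1 - l) *\<^sub>R x) + norm (l *\<^sub>R (x + s2 *\<^sub>R w))"
    unfolding eq by (rule norm_triangle_ineq)
  also have "\<dots> = (1 - l) * norm x + l * norm (x + s2 *\<^sub>R w)" using l by simp
  finally have "norm (x + s1 *\<^sub>R w) - norm x \<le> l * (norm (x + s2 *\<^sub>R w) - norm x)"
    by (simp add: algebra_simps)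
  then have "(norm (x + s1 *\<^sub>R w) - norm x) / s1 \<le> l * (norm (x + s2 *\<^sub>R w) - norm x) / s1"
    using s1 by (simp add: divide_right_mono)
  also have "l * (norm (x + s2 *\<^sub>R w) - norm x) / s1 = (norm (x + s2 *\<^sub>R w) - norm x) / s2"
    using s1 s2 by (simp add: l_def)
  finally show ?thesis unfolding qd_def .
qed

lemma qd_bdd: "bdd_below (qd x w ` {0<..})"
  by (rule bdd_belowI[where m = "- norm w"]) (auto intro: qd_lower)

lemma gd_le: "s > 0 \<Longrightarrow> gd x w \<le> qd x w s"
  unfolding gd_def by (rule cInf_lower) (auto intro: qd_bdd)

lemma gd_ge: "(\<And>s. s > 0 \<Longrightarrow> c \<le> qd x w s) \<Longrightarrow> c \<le> gd x w"
  unfolding gd_def by (rule cInf_greatest) auto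

lemma gd_lt: "gd x w < c \<Longrightarrow> \<exists>s>0. qd x w s < c"
  unfolding gd_def using cInf_lessD[of "qd x w ` {0<..}" c] by auto

lemma gd_bound: "\<bar>gd x w\<bar> \<le> norm w"
proof -
  have "gd x w \<le> qd x w 1" by (rule gd_le) simp
  also have "\<dots> \<le> norm w" by (rule qd_upper) simp
  finally have a: "gd x w \<le> norm w" .
  have "- norm w \<le> gd x w" by (rule gd_ge) (rule qd_lower)
  with a show ?thesis by simp
qed

lemma qd_sum_eq: "qd x w s + qd x (-w) s = (norm (x + s *\<^sub>R w) + norm (x - s *\<^sub>R w) - 2 * norm x) / s"
  by (simp add: qd_def diff_divide_distrib add_divide_distrib)

lemma qd_sum_nonneg:
  assumes s: "s > 0" shows "0 \<le> qd x w s + qd x (-w) s"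
proof -
  have eq: "2 *\<^sub>R x = (x + s *\<^sub>R w) + (x + s *\<^sub>R (-w))" by (simp add: algebra_simps scaleR_2)
  have "norm (2 *\<^sub>R x) \<le> norm (x + s *\<^sub>R w) + norm (x + s *\<^sub>R (-w))"
    unfolding eq by (rule norm_triangle_ineq)
  then have "0 \<le> (norm (x + s *\<^sub>R w) - norm x) + (norm (x + s *\<^sub>R (-w)) - norm x)" by simp
  then have "0 \<le> (norm (x + s *\<^sub>R w) + norm (x - s *\<^sub>R w) - 2 * norm x) / s"
    using s by simp
  then show ?thesis by (simp only: qd_sum_eq)
qed

lemma gd_neg_ge: "0 \<le> gd x w + gd x (-w)"
proof -
  have h: "- qd x (-w) s2 \<le> gd x w" if s2: "s2 > 0" for s2
  proof (rule gd_ge)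
    fix s1 :: real assume s1: "s1 > 0"
    define s where "s = min s1 s2"
    have s: "s > 0" "s \<le> s1" "s \<le> s2" using s1 s2 by (auto simp: s_def)
    have "qd x w s \<le> qd x w s1" by (rule qd_mono) (use s in auto)
    moreover have "qd x (-w) s \<le> qd x (-w) s2" by (rule qd_mono) (use s in auto)
    moreover have "0 \<le> qd x w s + qd x (-w) s" by (rule qd_sum_nonneg) (use s in auto)
    ultimately show "- qd x (-w) s2 \<le> qd x w s1" by linarith
  qed
  have "- gd x w \<le> gd x (-w)"
  proof (rule gd_ge)
    fix s :: real assume "s > 0"
    from h[OF this] show "- gd x w \<le> qd x (-w) s" by linarith
  qed
  then show ?thesis by simp
qed

lemma usD:
  assumes "uniformly_smooth TYPE('a::real_normed_vector)" "e > 0"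
  shows "\<exists>d>0. \<forall>t. 0 < t \<and> t \<le> d \<longrightarrow>
        (\<forall>x y::'a. norm x = 1 \<and> norm y = t \<longrightarrow>
            (norm (x + y) + norm (x - y)) / 2 - 1 \<le> e * t)"
  using assms unfolding uniformly_smooth_def by blast

lemma smooth_step:
  fixes x w :: "'a::real_normed_vector"
  assumes us: "uniformly_smooth TYPE('a)" and x: "x \<noteq> 0" and w: "w \<noteq> 0" and e: "e > 0"
  shows "\<exists>s>0. norm (x + s *\<^sub>R w) + norm (x - s *\<^sub>R w) - 2 * norm x \<le> e * s"
proof -
  define e1 where "e1 = e / (2 * norm w)"
  have e1: "e1 > 0" using e w by (simp add: e1_def)
  from usD[OF us e1] obtain d where d: "d > 0" and H0: "\<forall>t. 0 < t \<and> t \<le> d \<longrightarrow>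
        (\<forall>x y::'a. norm x = 1 \<and> norm y = t \<longrightarrow>
            (norm (x + y) + norm (x - y)) / 2 - 1 \<le> e1 * t)" by blast
  have nx: "norm x > 0" and nw: "norm w > 0" using x w by auto
  define s where "s = d * norm x / norm w"
  have s: "s > 0" using d nx nw by (simp add: s_def)
  define x' where "x' = (1 / norm x) *\<^sub>R x"
  define y where "y = (s / norm x) *\<^sub>R w"
  have nx': "norm x' = 1" using nx by (simp add: x'_def)
  have ny: "norm y = d" using nx nw s d by (simp add: y_def s_def)
  have "(norm (x' + y) + norm (x' - y)) / 2 - 1 \<le> e1 * d"
    using H0[rule_format, of d x' y] d nx' ny by simp
  moreover have "x' + y = (1 / norm x) *\<^sub>R (x + s *\<^sub>R w)" by (simp add: x'_def y_def algebra_simps)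
  moreover have "x' - y = (1 / norm x) *\<^sub>R (x - s *\<^sub>R w)" by (simp add: x'_def y_def algebra_simps)
  ultimately have "(norm (x + s *\<^sub>R w) / norm x + norm (x - s *\<^sub>R w) / norm x) / 2 - 1 \<le> e1 * d"
    using nx by simp
  then have "norm (x + s *\<^sub>R w) + norm (x - s *\<^sub>R w) - 2 * norm x \<le> e1 * d * 2 * norm x"
    using nx by (simp add: divide_simps add_divide_distrib[symmetric] split: if_splits)
  moreover have "e1 * d * 2 * norm x = e * s"
    using nx nw by (simp add: e1_def s_def)
  ultimately have "norm (x + s *\<^sub>R w) + norm (x - s *\<^sub>R w) - 2 * norm x \<le> e * s"
    by linarith
  then show ?thesis using s by blast
qed

lemma gd_zero: "gd x 0 = 0"
proof -
  have "gd x 0 \<le> qd x 0 1" by (rule gd_le) simp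
  moreover have "0 \<le> gd x 0" by (rule gd_ge) (simp add: qd_def)
  ultimately show ?thesis by (simp add: qd_def)
qed

lemma gd_neg_le:
  fixes x w :: "'a::real_normed_vector"
  assumes us: "uniformly_smooth TYPE('a)" and x: "x \<noteq> 0"
  shows "gd x w + gd x (-w) \<le> 0"
proof (cases "w = 0")
  case True then show ?thesis by (simp add: gd_zero)
next
  case w: False
  show ?thesis
  proof (rule ccontr)
    assume "\<not> ?thesis"
    then have pos: "gd x w + gd x (-w) > 0" by simp
    define e where "e = (gd x w + gd x (-w)) / 2"
    have e: "e > 0" using pos by (simp add: e_def)
    obtain s where s: "s > 0" and H: "norm (x + s *\<^sub>R w) + norm (x - s *\<^sub>R w) - 2 * norm x \<le> e * s"
      using smooth_step[OF us x w e] by blast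
    have "gd x w + gd x (-w) \<le> qd x w s + qd x (-w) s"
      using gd_le[OF s, of x w] gd_le[OF s, of x "-w"] by simp
    also have "\<dots> = (norm (x + s *\<^sub>R w) + norm (x - s *\<^sub>R w) - 2 * norm x) / s"
      by (rule qd_sum_eq)
    also have "\<dots> \<le> e" using H s by (simp add: pos_divide_le_eq)
    finally show False using e by (simp add: e_def)
  qed
qed

lemma gd_odd:
  assumes "uniformly_smooth TYPE('a::real_normed_vector)" "(x::'a) \<noteq> 0"
  shows "gd x (-w) = - gd x w"
  using gd_neg_le[OF assms, of w] gd_neg_ge[of x w] by simp

lemma qd_scale: "c > 0 \<Longrightarrow> s > 0 \<Longrightarrow> qd x (c *\<^sub>R w) s = c * qd x w (c * s)"
  by (simp add: qd_def ac_simps)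

lemma gd_scale_pos:
  assumes c: "c > 0" shows "gd x (c *\<^sub>R w) = c * gd x w"
proof -
  have "gd x (c *\<^sub>R w) / c \<le> qd x w s" if s: "s > 0" for s
  proof -
    have "gd x (c *\<^sub>R w) \<le> qd x (c *\<^sub>R w) (s / c)" by (rule gd_le) (use s c in simp)
    also have "\<dots> = c * qd x w s" using c s by (simp add: qd_scale)
    finally show ?thesis using c by (simp add: divide_simps mult.commute)
  qed
  then have "gd x (c *\<^sub>R w) / c \<le> gd x w" by (rule gd_ge)
  then have a: "gd x (c *\<^sub>R w) \<le> c * gd x w" using c by (simp add: divide_simps mult.commute)
  have "c * gd x w \<le> qd x (c *\<^sub>R w) s" if s: "s > 0" for s
  proof -
    have "gd x w \<le> qd x w (c * s)" by (rule gd_le) (use s c in simp)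
    then have "c * gd x w \<le> c * qd x w (c * s)" using c by simp
    also have "\<dots> = qd x (c *\<^sub>R w) s" using c s by (simp add: qd_scale)
    finally show ?thesis .
  qed
  then have "c * gd x w \<le> gd x (c *\<^sub>R w)" by (rule gd_ge)
  with a show ?thesis by simp
qed

lemma qd_subadd:
  assumes s: "s > 0" shows "qd x (a + b) s \<le> qd x a (2 * s) + qd x b (2 * s)"
proof -
  have h: "(1/2) *\<^sub>R x + (1/2) *\<^sub>R x = x" by (simp add: scaleR_add_left[symmetric])
  have eq0: "(1/2) *\<^sub>R (x + (2 * s) *\<^sub>R a) + (1/2) *\<^sub>R (x + (2 * s) *\<^sub>R b) = ((1/2) *\<^sub>R x + (1/2) *\<^sub>R x) + s *\<^sub>R (a + b)"
    by (simp add: algebra_simps)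
  have eq: "x + s *\<^sub>R (a + b) = (1/2) *\<^sub>R (x + (2 * s) *\<^sub>R a) + (1/2) *\<^sub>R (x + (2 * s) *\<^sub>R b)"
    unfolding eq0 h ..
  have "norm (x + s *\<^sub>R (a + b)) \<le> norm ((1/2) *\<^sub>R (x + (2 * s) *\<^sub>R a)) + norm ((1/2) *\<^sub>R (x + (2 * s) *\<^sub>R b))"
    unfolding eq by (rule norm_triangle_ineq)
  then have "norm (x + s *\<^sub>R (a + b)) - norm x \<le>
      ((norm (x + (2 * s) *\<^sub>R a) - norm x) + (norm (x + (2 * s) *\<^sub>R b) - norm x)) / 2"
    by simp
  then have h2: "(norm (x + s *\<^sub>R (a + b)) - norm x) / s \<le>
      (((norm (x + (2 * s) *\<^sub>R a) - norm x) + (norm (x + (2 * s) *\<^sub>R b) - norm x)) / 2) / s"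
    using s by (intro divide_right_mono) auto
  have e1: "qd x a (2 * s) + qd x b (2 * s) = ((norm (x + (2 * s) *\<^sub>R a) - norm x) + (norm (x + (2 * s) *\<^sub>R b) - norm x)) / (2 * s)"
    by (simp only: qd_def add_divide_distrib)
  have e2: "(((norm (x + (2 * s) *\<^sub>R a) - norm x) + (norm (x + (2 * s) *\<^sub>R b) - norm x)) / 2) / s
     = ((norm (x + (2 * s) *\<^sub>R a) - norm x) + (norm (x + (2 * s) *\<^sub>R b) - norm x)) / (2 * s)"
    by (simp only: divide_divide_eq_left)
  have e3: "qd x (a + b) s = (norm (x + s *\<^sub>R (a + b)) - norm x) / s" by (simp only: qd_def)
  show ?thesis unfolding e1 e3 using h2 unfolding e2 .
qed

lemma gd_subadd: "gd x (a + b) \<le> gd x a + gd x b"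
proof -
  have h: "gd x (a + b) - qd x b s2 \<le> gd x a" if s2: "s2 > 0" for s2
  proof (rule gd_ge)
    fix s1 :: real assume s1: "s1 > 0"
    define s where "s = min s1 s2 / 2"
    have s: "s > 0" "2 * s \<le> s1" "2 * s \<le> s2" using s1 s2 by (auto simp: s_def)
    have "gd x (a + b) \<le> qd x (a + b) s" by (rule gd_le) (use s in auto)
    also have "\<dots> \<le> qd x a (2 * s) + qd x b (2 * s)" by (rule qd_subadd) (use s in auto)
    also have "qd x a (2 * s) \<le> qd x a s1" by (rule qd_mono) (use s in auto)
    also have "qd x b (2 * s) \<le> qd x b s2" by (rule qd_mono) (use s in auto)
    finally show "gd x (a + b) - qd x b s2 \<le> qd x a s1" by simp
  qed
  then have "gd x (a + b) - gd x a \<le> qd x b s2" if "s2 > 0" for s2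
    using h[OF that] by linarith
  then have "gd x (a + b) - gd x a \<le> gd x b" by (rule gd_ge)
  then show ?thesis by simp
qed

lemma gd_add:
  assumes "uniformly_smooth TYPE('a::real_normed_vector)" "(x::'a) \<noteq> 0"
  shows "gd x (a + b) = gd x a + gd x b"
proof -
  have "gd x (- a + - b) \<le> gd x (-a) + gd x (-b)" by (rule gd_subadd)
  then have "gd x (-(a + b)) \<le> - gd x a - gd x b" using gd_odd[OF assms] by simp
  moreover have "gd x (-a - b) = - gd x (a+b)" using gd_odd[OF assms, of "a+b"] by simp
  ultimately have "gd x a + gd x b \<le> gd x (a + b)" by simp
  with gd_subadd[of x a b] show ?thesis by simp
qed

lemma gd_scale:
  assumes "uniformly_smooth TYPE('a::real_normed_vector)" "(x::'a) \<noteq> 0"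
  shows "gd x (c *\<^sub>R w) = c * gd x w"
proof (cases "c > 0")
  case True then show ?thesis by (rule gd_scale_pos)
next
  case False
  show ?thesis
  proof (cases "c = 0")
    case True then show ?thesis by (simp add: gd_zero)
  next
    case False
    with \<open>\<not> c > 0\<close> have c: "-c > 0" by simp
    have e1: "c *\<^sub>R w = - ((-c) *\<^sub>R w)" by simp
    have e2: "gd x (- ((-c) *\<^sub>R w)) = - gd x ((-c) *\<^sub>R w)" by (rule gd_odd[OF assms])
    have e3: "gd x ((-c) *\<^sub>R w) = (-c) * gd x w" by (rule gd_scale_pos[OF c])
    show ?thesis unfolding e1 e2 e3 by simp
  qed
qed

lemma gd_self: "gd x x = norm x"
proof -
  have q: "qd x x s = norm x" if "s > 0" for s
  proof -
    have "x + s *\<^sub>R x = (1 + s) *\<^sub>R x" by (simp add: algebra_simps)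
    then have "norm (x + s *\<^sub>R x) = (1 + s) * norm x" using that by simp
    then show ?thesis using that by (simp add: qd_def algebra_simps)
  qed
  have "gd x x \<le> qd x x 1" by (rule gd_le) simp
  moreover have "norm x \<le> gd x x" by (rule gd_ge) (simp add: q)
  ultimately show ?thesis using q[of 1] by simp
qed




lemma gd_bl:
  assumes "uniformly_smooth TYPE('a::real_normed_vector)" "(x::'a) \<noteq> 0"
  shows "bounded_linear (\<lambda>w. norm x * gd x w)"
proof (rule bounded_linear_intro[where K = "norm x"])
  fix a b show "norm x * gd x (a + b) = norm x * gd x a + norm x * gd x b"
    by (simp add: gd_add[OF assms] algebra_simps)
next
  fix r w show "norm x * gd x (r *\<^sub>R w) = r *\<^sub>R (norm x * gd x w)"
    by (simp add: gd_scale[OF assms])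
next
  fix w have "norm x * \<bar>gd x w\<bar> \<le> norm x * norm w" by (rule mult_left_mono[OF gd_bound norm_ge_zero])
  then show "norm (norm x * gd x w) \<le> norm w * norm x" by (simp add: abs_mult mult.commute)
qed

lemma norming_exists:
  fixes x :: "'a::real_normed_vector"
  assumes us: "uniformly_smooth TYPE('a)"
  shows "\<exists>f::'a \<Rightarrow>\<^sub>L real. blinfun_apply f x = norm x ^ 2 \<and> norm f = norm x"
proof (cases "x = 0")
  case True then show ?thesis by (intro exI[of _ 0]) simp
next
  case x: False
  define f where "f = Blinfun (\<lambda>w. norm x * gd x w)"
  have fa: "blinfun_apply f w = norm x * gd x w" for w
    unfolding f_def using gd_bl[OF us x] by (simp add: bounded_linear_Blinfun_apply)
  have fx: "blinfun_apply f x = norm x ^ 2" by (simp add: fa gd_self power2_eq_square)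
  have le: "norm f \<le> norm x"
  proof (rule norm_blinfun_bound)
    fix w have "norm x * \<bar>gd x w\<bar> \<le> norm x * norm w" by (rule mult_left_mono[OF gd_bound norm_ge_zero])
    then show "norm (blinfun_apply f w) \<le> norm x * norm w" by (simp add: fa abs_mult)
  qed simp
  have "norm x ^ 2 \<le> norm f * norm x" using norm_blinfun[of f x] fx by simp
  then have "norm x \<le> norm f" using x by (simp add: power2_eq_square)
  with le fx show ?thesis by (intro exI[of _ f]) simp
qed

lemma J_char:
  fixes x :: "'a::real_normed_vector"
  assumes us: "uniformly_smooth TYPE('a)"
  shows "blinfun_apply (duality_map x) x = norm x ^ 2" "norm (duality_map x) = norm x"
proof -
  have "blinfun_apply (duality_map x) x = norm x ^ 2 \<and> norm (duality_map x) = norm x"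
    unfolding duality_map_def by (rule someI_ex) (rule norming_exists[OF us])
  then show "blinfun_apply (duality_map x) x = norm x ^ 2" "norm (duality_map x) = norm x" by auto
qed

lemma norming_gd:
  fixes x :: "'a::real_normed_vector"
  assumes us: "uniformly_smooth TYPE('a)" and x: "x \<noteq> 0"
    and f1: "blinfun_apply f x = norm x ^ 2" and f2: "norm f = norm x"
  shows "blinfun_apply f w = norm x * gd x w"
proof -
  have nx: "norm x > 0" using x by simp
  have key: "blinfun_apply f v / norm x \<le> gd x v" for v
  proof (rule gd_ge)
    fix s :: real assume s: "s > 0"
    have "blinfun_apply f (x + s *\<^sub>R v) \<le> norm f * norm (x + s *\<^sub>R v)"
      using norm_blinfun[of f "x + s *\<^sub>R v"] by simp
    then have "norm x ^ 2 + s * blinfun_apply f v \<le> norm x * norm (x + s *\<^sub>R v)"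
      by (simp add: f1 f2 blinfun.add_right blinfun.scaleR_right)
    then have "s * blinfun_apply f v \<le> norm x * (norm (x + s *\<^sub>R v) - norm x)"
      by (simp add: power2_eq_square algebra_simps)
    then have "s * blinfun_apply f v / (s * norm x) \<le> norm x * (norm (x + s *\<^sub>R v) - norm x) / (s * norm x)"
      using s nx by (intro divide_right_mono) auto
    then show "blinfun_apply f v / norm x \<le> qd x v s" using s nx by (simp add: qd_def)
  qed
  have "blinfun_apply f w / norm x \<le> gd x w" by (rule key)
  moreover have "blinfun_apply f (-w) / norm x \<le> gd x (-w)" by (rule key)
  ultimately have "blinfun_apply f w / norm x = gd x w"
    using gd_odd[OF us x, of w] by (simp add: blinfun.minus_right)
  then show ?thesis using nx by (simp add: divide_simps mult.commute)
qed

lemma J_unique: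
  fixes x :: "'a::real_normed_vector"
  assumes us: "uniformly_smooth TYPE('a)"
    and f1: "blinfun_apply f x = norm x ^ 2" and f2: "norm f = norm x"
  shows "f = duality_map x"
proof (cases "x = 0")
  case True
  then have "f = 0" "duality_map x = 0" using f2 J_char(2)[OF us, of x] by auto
  then show ?thesis by simp
next
  case x: False
  show ?thesis
  proof (rule blinfun_eqI)
    fix w
    show "blinfun_apply f w = blinfun_apply (duality_map x) w"
      using norming_gd[OF us x f1 f2] norming_gd[OF us x J_char[OF us]] by simp
  qed
qed

lemma J_descent:
  fixes x k :: "'a::real_normed_vector"
  assumes us: "uniformly_smooth TYPE('a)" and pos: "blinfun_apply (duality_map x) k > 0"
  shows "\<exists>s>0. norm (x - s *\<^sub>R k) < norm x"
proof -
  have x: "x \<noteq> 0"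
  proof
    assume "x = 0"
    then have "duality_map x = 0" using J_char(2)[OF us, of x] by simp
    with pos show False by simp
  qed
  have "norm x * gd x k > 0" using pos norming_gd[OF us x J_char[OF us]] by simp
  then have "gd x k > 0" using x by (simp add: zero_less_mult_iff)
  then have "gd x (-k) < 0" using gd_odd[OF us x] by simp
  then obtain s where s: "s > 0" and "qd x (-k) s < 0" using gd_lt by blast
  then have "(norm (x - s *\<^sub>R k) - norm x) / s < 0" by (simp add: qd_def)
  then have "norm (x - s *\<^sub>R k) < norm x" using s by (simp add: divide_less_0_iff)
  then show ?thesis using s by blast
qed




lemma J_zero: "uniformly_smooth TYPE('a::real_normed_vector) \<Longrightarrow> duality_map (0::'a) = 0"
  using J_char(2)[of 0] by simp

lemma J_scale:
  fixes x :: "'a::real_normed_vector"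
  assumes us: "uniformly_smooth TYPE('a)"
  shows "duality_map (c *\<^sub>R x) = c *\<^sub>R duality_map x"
proof -
  have "blinfun_apply (c *\<^sub>R duality_map x) (c *\<^sub>R x) = c * (c * norm x ^ 2)"
    using J_char(1)[OF us, of x] by (simp add: blinfun.scaleR_left blinfun.scaleR_right)
  also have "\<dots> = c ^ 2 * norm x ^ 2" by (simp add: power2_eq_square)
  also have "\<dots> = norm (c *\<^sub>R x) ^ 2" by (simp add: power_mult_distrib)
  finally have a: "blinfun_apply (c *\<^sub>R duality_map x) (c *\<^sub>R x) = norm (c *\<^sub>R x) ^ 2" .
  have b: "norm (c *\<^sub>R duality_map x) = norm (c *\<^sub>R x)"
    using J_char(2)[OF us, of x] by simp
  show ?thesis using J_unique[OF us a b] by simp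
qed

lemma J_inj:
  fixes x y :: "'a::real_normed_vector"
  assumes uc: "uniformly_convex TYPE('a)" and us: "uniformly_smooth TYPE('a)"
    and eq: "duality_map x = duality_map y"
  shows "x = y"
proof -
  define r where "r = norm x"
  have ry: "norm y = r" using J_char(2)[OF us, of x] J_char(2)[OF us, of y] eq by (simp add: r_def)
  have fx: "blinfun_apply (duality_map x) x = r ^ 2" using J_char(1)[OF us, of x] by (simp add: r_def)
  have fy: "blinfun_apply (duality_map x) y = r ^ 2" using J_char(1)[OF us, of y] eq ry by simp
  have "blinfun_apply (duality_map x) ((1/2) *\<^sub>R (x + y)) = r ^ 2"
    using fx fy by (simp add: blinfun.scaleR_right blinfun.add_right)
  moreover have "blinfun_apply (duality_map x) ((1/2) *\<^sub>R (x + y)) \<le> r * norm ((1/2) *\<^sub>R (x + y))"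
    using norm_blinfun[of "duality_map x" "(1/2) *\<^sub>R (x + y)"] J_char(2)[OF us, of x]
    by (simp add: r_def)
  ultimately have h: "r * r \<le> r * norm ((1/2) *\<^sub>R (x + y))" by (simp add: power2_eq_square)
  show ?thesis
  proof (cases "r = 0")
    case True then show ?thesis using ry by (simp add: r_def)
  next
    case False
    then have "r > 0" by (simp add: r_def)
    with h have m: "r \<le> norm ((1/2) *\<^sub>R (x + y))" by simp
    have "norm x \<le> r" "norm y \<le> r" by (simp_all add: r_def ry)
    from sc_lemma[OF uc this m] show ?thesis .
  qed
qed

lemma J_parallel:
  fixes x y :: "'a::real_normed_vector"
  assumes uc: "uniformly_convex TYPE('a)" and us: "uniformly_smooth TYPE('a)"
    and y: "y \<noteq> 0" and eq: "\<bar>blinfun_apply (duality_map x) y\<bar> = norm x * norm y"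
  shows "\<exists>c. x = c *\<^sub>R y"
proof -
  have ny: "norm y > 0" using y by simp
  obtain c where c: "\<bar>c\<bar> = norm x / norm y" and cy: "blinfun_apply (duality_map x) (c *\<^sub>R y) = norm x ^ 2"
  proof (cases "blinfun_apply (duality_map x) y \<ge> 0")
    case True
    show ?thesis
    proof (rule that[of "norm x / norm y"])
      show "\<bar>norm x / norm y\<bar> = norm x / norm y" by simp
      show "blinfun_apply (duality_map x) ((norm x / norm y) *\<^sub>R y) = norm x ^ 2"
        using True eq ny by (simp add: blinfun.scaleR_right power2_eq_square)
    qed
  next
    case False
    show ?thesis
    proof (rule that[of "- (norm x / norm y)"])
      show "\<bar>- (norm x / norm y)\<bar> = norm x / norm y" by simp
      have "blinfun_apply (duality_map x) ((- (norm x / norm y)) *\<^sub>R y) = (norm x / norm y) * (- blinfun_apply (duality_map x) y)"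
        by (simp only: blinfun.scaleR_right) simp
      also have "\<dots> = (norm x / norm y) * (norm x * norm y)" using False eq by simp
      also have "\<dots> = norm x ^ 2" using ny by (simp add: power2_eq_square)
      finally show "blinfun_apply (duality_map x) ((- (norm x / norm y)) *\<^sub>R y) = norm x ^ 2" .
    qed
  qed
  have nw: "norm (c *\<^sub>R y) = norm x" using c ny by simp
  have a: "blinfun_apply (duality_map x) (c *\<^sub>R y) = norm (c *\<^sub>R y) ^ 2" using cy nw by simp
  have b: "norm (duality_map x) = norm (c *\<^sub>R y)" using nw J_char(2)[OF us, of x] by simp
  have "duality_map x = duality_map (c *\<^sub>R y)" by (rule J_unique[OF us a b])
  then have "x = c *\<^sub>R y" by (rule J_inj[OF uc us])
  then show ?thesis by blast
qed

lemma J_delta: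
  fixes x y :: "'a::real_normed_vector"
  assumes uc: "uniformly_convex TYPE('a)" and us: "uniformly_smooth TYPE('a)"
    and i1: "\<forall>c. y \<noteq> c *\<^sub>R x" and i2: "\<forall>c. x \<noteq> c *\<^sub>R y"
  shows "blinfun_apply (duality_map x) y * blinfun_apply (duality_map y) x < norm x ^ 2 * norm y ^ 2"
proof -
  have x: "x \<noteq> 0" using i2 by (metis scaleR_zero_left)
  have y: "y \<noteq> 0" using i1 by (metis scaleR_zero_left)
  define M where "M = norm x * norm y"
  have M: "M > 0" using x y by (simp add: M_def)
  define a where "a = blinfun_apply (duality_map x) y"
  define b where "b = blinfun_apply (duality_map y) x"
  have a1: "\<bar>a\<bar> \<le> M" using norm_blinfun[of "duality_map x" y] J_char(2)[OF us, of x] by (simp add: a_def M_def)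
  have b1: "\<bar>b\<bar> \<le> M" using norm_blinfun[of "duality_map y" x] J_char(2)[OF us, of y] by (simp add: b_def M_def mult.commute)
  have a2: "\<bar>a\<bar> \<noteq> M" using J_parallel[OF uc us y, of x] i2 by (auto simp: a_def M_def)
  have "a * b \<le> \<bar>a\<bar> * \<bar>b\<bar>" by (metis abs_ge_self abs_mult)
  also have "\<dots> \<le> \<bar>a\<bar> * M" using b1 by (simp add: mult_left_mono)
  also have "\<dots> < M * M" using a1 a2 M by (simp add: mult_strict_right_mono)
  finally show ?thesis by (simp add: a_def b_def M_def power2_eq_square mult_ac)
qed

lemma blin_le: "blinfun_apply (f :: 'a::real_normed_vector \<Rightarrow>\<^sub>L real) x \<le> norm f * norm x"
proof -
  have "\<bar>blinfun_apply f x\<bar> \<le> norm f * norm x" using norm_blinfun[of f x] by simp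
  then show ?thesis by linarith
qed

lemma approx_norm:
  fixes f :: "'a::real_normed_vector \<Rightarrow>\<^sub>L real"
  assumes e: "e > 0"
  shows "\<exists>u. norm u \<le> 1 \<and> blinfun_apply f u > norm f - e"
proof (rule ccontr)
  assume "\<not> ?thesis"
  then have H: "\<And>u. norm u \<le> 1 \<Longrightarrow> blinfun_apply f u \<le> norm f - e" by (meson not_less)
  have b: "0 \<le> norm f - e" using H[of 0] by simp
  have "norm f \<le> norm f - e"
  proof (rule norm_blinfun_bound[OF b])
    fix x
    show "norm (blinfun_apply f x) \<le> (norm f - e) * norm x"
    proof (cases "x = 0")
      case True then show ?thesis by simp
    next
      case False
      then have nx: "norm x > 0" by simp
      define u where "u = (1 / norm x) *\<^sub>R x"
      have nu: "norm u \<le> 1" "norm (-u) \<le> 1" using nx by (simp_all add: u_def)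
      have "blinfun_apply f u \<le> norm f - e" "blinfun_apply f (-u) \<le> norm f - e"
        using H nu by auto
      then have "\<bar>blinfun_apply f u\<bar> \<le> norm f - e" by (simp add: blinfun.minus_right)
      moreover have "blinfun_apply f u = blinfun_apply f x / norm x"
        by (simp add: u_def blinfun.scaleR_right)
      ultimately have "\<bar>blinfun_apply f x\<bar> / norm x \<le> norm f - e" using nx by simp
      then show ?thesis using nx by (simp add: pos_divide_le_eq)
    qed
  qed
  then show False using e by simp
qed

lemma norm_attain:
  fixes f :: "'a::banach \<Rightarrow>\<^sub>L real"
  assumes uc: "uniformly_convex TYPE('a)" and f: "f \<noteq> 0"
  shows "\<exists>u. norm u = 1 \<and> blinfun_apply f u = norm f"
proof -
  have nf: "norm f > 0" using f by simp
  have "\<forall>n. \<exists>u. norm u \<le> 1 \<and> blinfun_apply f u > norm f - 1 / (real n + 1)"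
  proof
    fix n :: nat show "\<exists>u. norm u \<le> 1 \<and> blinfun_apply f u > norm f - 1 / (real n + 1)"
      by (rule approx_norm) simp
  qed
  then obtain s where s: "\<And>n. norm (s n) \<le> 1" and sf: "\<And>n. blinfun_apply f (s n) > norm f - 1 / (real n + 1)"
    by metis
  have inv_small: "\<exists>N. \<forall>n\<ge>N. 1 / (real n + 1) < e" if e: "e > 0" for e :: real
  proof -
    obtain N where N: "inverse (real (Suc N)) < e" using reals_Archimedean[OF e] by blast
    have "1 / (real n + 1) < e" if "n \<ge> N" for n
    proof -
      have "1 / (real n + 1) \<le> 1 / (real N + 1)" using that by (simp add: frac_le)
      also have "\<dots> < e" using N by (simp add: inverse_eq_divide add.commute)
      finally show ?thesis .
    qed
    then show ?thesis by blast
  qed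
  have C: "Cauchy s"
  proof (rule uc_cauchy[OF uc, of 1])
    fix \<eta> :: real assume \<eta>: "\<eta> > 0"
    obtain N where N: "\<And>n. n \<ge> N \<Longrightarrow> 1 / (real n + 1) < \<eta> * norm f"
      using inv_small[of "\<eta> * norm f"] \<eta> nf by auto
    show "\<exists>N. \<forall>m\<ge>N. \<forall>n\<ge>N. norm (s m) \<le> 1 + \<eta> \<and> norm (s n) \<le> 1 + \<eta>
               \<and> norm ((1/2) *\<^sub>R (s m + s n)) \<ge> 1 - \<eta>"
    proof (intro exI allI impI conjI)
      fix m n assume mn: "N \<le> m" "N \<le> n"
      show "norm (s m) \<le> 1 + \<eta>" "norm (s n) \<le> 1 + \<eta>" using s[of m] s[of n] \<eta> by auto
      have "blinfun_apply f ((1/2) *\<^sub>R (s m + s n)) = (blinfun_apply f (s m) + blinfun_apply f (s n)) / 2"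
        by (simp add: blinfun.scaleR_right blinfun.add_right)
      also have "\<dots> > norm f - \<eta> * norm f"
        using sf[of m] sf[of n] N[OF mn(1)] N[OF mn(2)] by simp
      finally have "norm f * (1 - \<eta>) < blinfun_apply f ((1/2) *\<^sub>R (s m + s n))" by (simp add: algebra_simps)
      also have "\<dots> \<le> norm f * norm ((1/2) *\<^sub>R (s m + s n))" by (rule blin_le)
      finally show "1 - \<eta> \<le> norm ((1/2) *\<^sub>R (s m + s n))" using nf by simp
    qed
  qed simp
  then obtain l where l: "s \<longlonglongrightarrow> l" using Cauchy_convergent_iff convergent_def by blast
  have nl: "norm l \<le> 1"
    by (rule LIMSEQ_le_const2[OF tendsto_norm[OF l]]) (use s in auto)
  have fl: "(\<lambda>n. blinfun_apply f (s n)) \<longlonglongrightarrow> blinfun_apply f l"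
    by (rule blinfun.tendsto[OF tendsto_const l])
  have ge: "norm f - e \<le> blinfun_apply f l" if e: "e > 0" for e
  proof (rule LIMSEQ_le_const[OF fl])
    obtain N where N: "\<And>n. n \<ge> N \<Longrightarrow> 1 / (real n + 1) < e" using inv_small[OF e] by blast
    show "\<exists>N. \<forall>n\<ge>N. norm f - e \<le> blinfun_apply f (s n)"
      using N sf by (meson less_eq_real_def less_trans diff_strict_left_mono)
  qed
  have ge2: "norm f \<le> blinfun_apply f l"
  proof (rule ccontr)
    assume a: "\<not> ?thesis"
    then have "(norm f - blinfun_apply f l) / 2 > 0" by simp
    from ge[OF this] a show False by (simp add: field_simps)
  qed
  have le: "blinfun_apply f l \<le> norm f * norm l"
    by (rule blin_le)
  have "norm f * 1 \<le> norm f * norm l" using ge2 le by simp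
  then have "1 \<le> norm l" using nf by (simp only: mult_le_cancel_left_pos)
  with nl have "norm l = 1" by simp
  moreover have "blinfun_apply f l = norm f" using ge2 le \<open>norm l = 1\<close> by simp
  ultimately show ?thesis by blast
qed

lemma J_surj:
  fixes f :: "'a::banach \<Rightarrow>\<^sub>L real"
  assumes uc: "uniformly_convex TYPE('a)" and us: "uniformly_smooth TYPE('a)"
  shows "\<exists>x. duality_map x = f"
proof (cases "f = 0")
  case True then show ?thesis using J_zero[OF us] by blast
next
  case False
  obtain u where u: "norm u = 1" "blinfun_apply f u = norm f" using norm_attain[OF uc False] by blast
  define x where "x = norm f *\<^sub>R u"
  have a: "blinfun_apply f x = norm x ^ 2" using u by (simp add: x_def blinfun.scaleR_right power2_eq_square)
  have b: "norm f = norm x" using u by (simp add: x_def)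
  show ?thesis using J_unique[OF us a b] by metis
qed




lemma nearest_exists:
  fixes K :: "'a::banach set"
  assumes uc: "uniformly_convex TYPE('a)" and K: "closed K" "convex K" "K \<noteq> {}"
  shows "\<exists>c\<in>K. \<forall>d\<in>K. norm (x - c) \<le> norm (x - d)"
proof -
  define d0 where "d0 = infdist x K"
  have d0le: "d0 \<le> norm (x - d)" if "d \<in> K" for d
    using infdist_le[OF that, of x] by (simp add: d0_def dist_norm)
  show ?thesis
  proof (cases "d0 = 0")
    case True
    then have "x \<in> closure K" using in_closure_iff_infdist_zero[OF K(3)] by (simp add: d0_def)
    then have "x \<in> K" using K(1) by simp
    then show ?thesis by (intro bexI[of _ x]) auto
  next
    case False
    have "d0 \<ge> 0" by (simp add: d0_def infdist_nonneg)
    with False have d0: "d0 > 0" by simp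
    have near: "\<exists>c\<in>K. norm (x - c) < d0 + e" if e: "e > 0" for e
    proof -
      have "infdist x K = Inf (dist x ` K)" using K(3) by (simp add: infdist_def)
      then have "Inf (dist x ` K) < d0 + e" using e by (simp add: d0_def)
      then obtain t where "t \<in> dist x ` K" "t < d0 + e"
        using cInf_lessD[of "dist x ` K" "d0 + e"] K(3) by blast
      then show ?thesis by (auto simp: dist_norm)
    qed
    have "\<forall>n. \<exists>c\<in>K. norm (x - c) < d0 + 1 / (real n + 1)"
    proof
      fix n :: nat show "\<exists>c\<in>K. norm (x - c) < d0 + 1 / (real n + 1)" by (rule near) simp
    qed
    then obtain c where cK: "\<And>n. c n \<in> K" and cn: "\<And>n. norm (x - c n) < d0 + 1 / (real n + 1)"
      by metis
    have inv_small: "\<exists>N. \<forall>n\<ge>N. 1 / (real n + 1) < e" if e: "e > 0" for e :: real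
    proof -
      obtain N where N: "inverse (real (Suc N)) < e" using reals_Archimedean[OF e] by blast
      have "1 / (real n + 1) < e" if "n \<ge> N" for n
      proof -
        have "1 / (real n + 1) \<le> 1 / (real N + 1)" using that by (simp add: frac_le)
        also have "\<dots> < e" using N by (simp add: inverse_eq_divide add.commute)
        finally show ?thesis .
      qed
      then show ?thesis by blast
    qed
    define s where "s n = x - c n" for n
    have C: "Cauchy s"
    proof (rule uc_cauchy[OF uc d0])
      fix \<eta> :: real assume \<eta>: "\<eta> > 0"
      obtain N where N: "\<And>n. n \<ge> N \<Longrightarrow> 1 / (real n + 1) < \<eta>" using inv_small[OF \<eta>] by blast
      show "\<exists>N. \<forall>m\<ge>N. \<forall>n\<ge>N. norm (s m) \<le> d0 + \<eta> \<and> norm (s n) \<le> d0 + \<eta>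
               \<and> norm ((1/2) *\<^sub>R (s m + s n)) \<ge> d0 - \<eta>"
      proof (intro exI allI impI conjI)
        fix m n assume mn: "N \<le> m" "N \<le> n"
        show "norm (s m) \<le> d0 + \<eta>" using cn[of m] N[OF mn(1)] by (simp add: s_def)
        show "norm (s n) \<le> d0 + \<eta>" using cn[of n] N[OF mn(2)] by (simp add: s_def)
        have mid: "(1/2) *\<^sub>R c m + (1/2) *\<^sub>R c n \<in> K"
          using convexD[OF K(2) cK[of m] cK[of n], of "1/2" "1/2"] by simp
        have "(1/2) *\<^sub>R (s m + s n) = x - ((1/2) *\<^sub>R c m + (1/2) *\<^sub>R c n)"
          by (simp add: s_def algebra_simps scaleR_add_left[symmetric])
        then have "norm ((1/2) *\<^sub>R (s m + s n)) \<ge> d0" using d0le[OF mid] by simp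
        then show "norm ((1/2) *\<^sub>R (s m + s n)) \<ge> d0 - \<eta>" using \<eta> by simp
      qed
    qed
    then obtain l where l: "s \<longlonglongrightarrow> l" using Cauchy_convergent_iff convergent_def by blast
    have cl: "c \<longlonglongrightarrow> x - l"
    proof -
      have "(\<lambda>n. x - s n) \<longlonglongrightarrow> x - l" by (intro tendsto_intros l)
      moreover have "(\<lambda>n. x - s n) = c" by (simp add: s_def)
      ultimately show ?thesis by simp
    qed
    have inK: "x - l \<in> K" by (rule closed_sequentially[OF K(1) _ cl]) (use cK in auto)
    have nl: "norm l \<le> d0 + e" if e: "e > 0" for e
    proof (rule LIMSEQ_le_const2[OF tendsto_norm[OF l]])
      obtain N where N: "\<And>n. n \<ge> N \<Longrightarrow> 1 / (real n + 1) < e" using inv_small[OF e] by blast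
      show "\<exists>N. \<forall>n\<ge>N. norm (s n) \<le> d0 + e"
      proof (intro exI allI impI)
        fix n assume "N \<le> n"
        then show "norm (s n) \<le> d0 + e" using cn[of n] N[of n] by (simp add: s_def)
      qed
    qed
    have nl2: "norm l \<le> d0"
    proof (rule ccontr)
      assume a: "\<not> ?thesis"
      then have "(norm l - d0) / 2 > 0" by simp
      from nl[OF this] a show False by (simp add: field_simps)
    qed
    show ?thesis
    proof (intro bexI[OF _ inK] ballI)
      fix d assume "d \<in> K"
      then show "norm (x - (x - l)) \<le> norm (x - d)" using nl2 d0le by fastforce
    qed
  qed
qed

lemma mp_eq:
  fixes K :: "'a::real_normed_vector set"
  assumes uc: "uniformly_convex TYPE('a)" and K: "convex K"
    and c: "c \<in> K" and cmin: "\<forall>d\<in>K. norm (x - c) \<le> norm (x - d)"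
  shows "metric_projection K x = c"
  unfolding metric_projection_def
proof (rule the_equality)
  show "c \<in> K \<and> (\<forall>d\<in>K. norm (x - c) \<le> norm (x - d))" using c cmin by blast
next
  fix c' assume c': "c' \<in> K \<and> (\<forall>d\<in>K. norm (x - c') \<le> norm (x - d))"
  have e: "norm (x - c') = norm (x - c)" using c' c cmin by (meson order_antisym)
  have mid: "(1/2) *\<^sub>R c' + (1/2) *\<^sub>R c \<in> K"
    using convexD[OF K conjunct1[OF c'] c, of "1/2" "1/2"] by simp
  have "(1/2) *\<^sub>R ((x - c') + (x - c)) = x - ((1/2) *\<^sub>R c' + (1/2) *\<^sub>R c)"
    by (simp add: algebra_simps scaleR_add_left[symmetric])
  then have m: "norm (x - c) \<le> norm ((1/2) *\<^sub>R ((x - c') + (x - c)))" using cmin mid by simp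
  have "x - c' = x - c" by (rule sc_lemma[OF uc _ _ m]) (use e in simp_all)
  then show "c' = c" by simp
qed

lemma polar_char:
  fixes K :: "'a::banach set"
  assumes uc: "uniformly_convex TYPE('a)" and us: "uniformly_smooth TYPE('a)"
    and K: "convex_cone K" "closed K"
  shows "x \<in> polar K \<longleftrightarrow> (\<forall>k\<in>K. blinfun_apply (duality_map x) k \<le> 0)"
proof -
  have Kne: "K \<noteq> {}" and Kc: "convex K" and Kcone: "\<And>k c. k \<in> K \<Longrightarrow> 0 \<le> c \<Longrightarrow> c *\<^sub>R k \<in> K"
    using K(1) unfolding convex_cone_def conic_def by blast+
  have K0: "0 \<in> K" using Kne Kcone[of _ 0] by fastforce
  show ?thesis
  proof
    assume "x \<in> polar K"
    then have P: "metric_projection K x = 0" by (simp add: polar_def)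
    obtain c where c: "c \<in> K" and cmin: "\<forall>d\<in>K. norm (x - c) \<le> norm (x - d)"
      using nearest_exists[OF uc K(2) Kc Kne, of x] by blast
    have "c = 0" using mp_eq[OF uc Kc c cmin] P by simp
    with cmin have min0: "\<And>d. d \<in> K \<Longrightarrow> norm x \<le> norm (x - d)" by simp
    show "\<forall>k\<in>K. blinfun_apply (duality_map x) k \<le> 0"
    proof (rule ballI, rule ccontr)
      fix k assume k: "k \<in> K" and "\<not> blinfun_apply (duality_map x) k \<le> 0"
      then have "blinfun_apply (duality_map x) k > 0" by simp
      then obtain s where s: "s > 0" and lt: "norm (x - s *\<^sub>R k) < norm x"
        using J_descent[OF us] by blast
      have "s *\<^sub>R k \<in> K" using Kcone[OF k] s by simp
      with min0 lt show False by fastforce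
    qed
  next
    assume H: "\<forall>k\<in>K. blinfun_apply (duality_map x) k \<le> 0"
    have "\<forall>d\<in>K. norm (x - 0) \<le> norm (x - d)"
    proof
      fix d assume d: "d \<in> K"
      have "norm x ^ 2 = blinfun_apply (duality_map x) x" using J_char(1)[OF us] by simp
      also have "\<dots> \<le> blinfun_apply (duality_map x) x - blinfun_apply (duality_map x) d"
        using H d by simp
      also have "\<dots> = blinfun_apply (duality_map x) (x - d)" by (simp add: blinfun.diff_right)
      also have "\<dots> \<le> norm (duality_map x) * norm (x - d)" by (rule blin_le)
      also have "\<dots> = norm x * norm (x - d)" using J_char(2)[OF us] by simp
      finally have h: "norm x * norm x \<le> norm x * norm (x - d)" by (simp add: power2_eq_square)
      show "norm (x - 0) \<le> norm (x - d)"
      proof (cases "x = 0")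
        case True then show ?thesis by simp
      next
        case False then have "norm x > 0" by simp
        with h show ?thesis by simp
      qed
    qed
    then have "metric_projection K x = 0" by (rule mp_eq[OF uc Kc K0])
    then show "x \<in> polar K" by (simp add: polar_def)
  qed
qed




definition indep2 :: "'a::real_vector \<Rightarrow> 'a \<Rightarrow> bool" where
  "indep2 a b \<longleftrightarrow> (\<forall>c. b \<noteq> c *\<^sub>R a) \<and> (\<forall>c. a \<noteq> c *\<^sub>R b)"

lemma indep_pair_indep2:
  fixes a b :: "'a::real_vector"
  assumes ind: "independent {a, b}" and ne: "a \<noteq> b"
  shows "indep2 a b"
  unfolding indep2_def
proof (intro conjI allI notI)
  fix c assume "b = c *\<^sub>R a"
  then have "b \<in> span ({a, b} - {b})" using ne by (simp add: span_base span_scale)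
  then have "dependent {a, b}" unfolding dependent_def by blast
  with ind show False by simp
next
  fix c assume "a = c *\<^sub>R b"
  then have "a \<in> span ({a, b} - {a})" using ne by (simp add: span_base span_scale)
  then have "dependent {a, b}" unfolding dependent_def by blast
  with ind show False by simp
qed

lemma indep2_pair:
  fixes a b :: "'a::real_vector"
  assumes "indep2 a b"
  shows "independent {a, b}" "a \<noteq> b"
proof -
  have b0: "b \<noteq> 0" using assms unfolding indep2_def by (metis scaleR_zero_left)
  have nb: "a \<notin> span {b}" using assms unfolding indep2_def by (auto simp: span_singleton)
  have ab: "a \<noteq> b" using assms unfolding indep2_def by (metis scaleR_one)
  have "independent {b}" using b0 by (simp add: independent_insert)
  then show "independent {a, b}" using nb ab by (simp add: independent_insert)
  show "a \<noteq> b" by (rule ab)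
qed

lemma span_pair:
  fixes f g :: "'a::real_vector"
  assumes "h \<in> span {f, g}"
  shows "\<exists>a b. h = a *\<^sub>R f + b *\<^sub>R g"
proof -
  have "subspace {h. \<exists>a b. h = a *\<^sub>R f + b *\<^sub>R g}"
    unfolding subspace_def
  proof (intro conjI ballI allI)
    show "0 \<in> {h. \<exists>a b. h = a *\<^sub>R f + b *\<^sub>R g}" by (auto intro: exI[of _ 0])
  next
    fix x y assume "x \<in> {h. \<exists>a b. h = a *\<^sub>R f + b *\<^sub>R g}" "y \<in> {h. \<exists>a b. h = a *\<^sub>R f + b *\<^sub>R g}"
    then obtain a1 b1 a2 b2 where "x = a1 *\<^sub>R f + b1 *\<^sub>R g" "y = a2 *\<^sub>R f + b2 *\<^sub>R g" by blast
    then have "x + y = (a1 + a2) *\<^sub>R f + (b1 + b2) *\<^sub>R g" by (simp add: algebra_simps)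
    then show "x + y \<in> {h. \<exists>a b. h = a *\<^sub>R f + b *\<^sub>R g}" by blast
  next
    fix c x assume "x \<in> {h. \<exists>a b. h = a *\<^sub>R f + b *\<^sub>R g}"
    then obtain a1 b1 where "x = a1 *\<^sub>R f + b1 *\<^sub>R g" by blast
    then have "c *\<^sub>R x = (c * a1) *\<^sub>R f + (c * b1) *\<^sub>R g" by (simp add: algebra_simps)
    then show "c *\<^sub>R x \<in> {h. \<exists>a b. h = a *\<^sub>R f + b *\<^sub>R g}" by blast
  qed
  moreover have "{f, g} \<subseteq> {h. \<exists>a b. h = a *\<^sub>R f + b *\<^sub>R g}"
  proof -
    have "f = 1 *\<^sub>R f + 0 *\<^sub>R g" "g = 0 *\<^sub>R f + 1 *\<^sub>R g" by simp_all
    then show ?thesis by blast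
  qed
  ultimately have "span {f, g} \<subseteq> {h. \<exists>a b. h = a *\<^sub>R f + b *\<^sub>R g}" by (rule span_minimal[rotated])
  with assms show ?thesis by blast
qed

lemma span_vanish:
  fixes f g :: "'a::real_normed_vector \<Rightarrow>\<^sub>L real"
  assumes h: "h \<in> span {f, g}" and "blinfun_apply f z = 0" "blinfun_apply g z = 0"
  shows "blinfun_apply h z = 0"
proof -
  obtain a b where "h = a *\<^sub>R f + b *\<^sub>R g" using span_pair[OF h] by blast
  then show ?thesis using assms by (simp add: blinfun.add_left blinfun.scaleR_left)
qed

lemma sep_functional:
  fixes f1 f2 :: "'a::real_normed_vector \<Rightarrow>\<^sub>L real"
  assumes i: "indep2 f1 f2"
  shows "\<exists>e. blinfun_apply f2 e = 0 \<and> blinfun_apply f1 e = 1"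
proof -
  have f2: "f2 \<noteq> 0" using i unfolding indep2_def by (metis scaleR_zero_left)
  obtain u where u: "blinfun_apply f2 u \<noteq> 0"
    using f2 by (metis blinfun_eqI zero_blinfun.rep_eq)
  define u' where "u' = (1 / blinfun_apply f2 u) *\<^sub>R u"
  have u': "blinfun_apply f2 u' = 1" using u by (simp add: u'_def blinfun.scaleR_right)
  have "\<exists>e. blinfun_apply f2 e = 0 \<and> blinfun_apply f1 e \<noteq> 0"
  proof (rule ccontr)
    assume "\<not> ?thesis"
    then have K: "\<And>e. blinfun_apply f2 e = 0 \<Longrightarrow> blinfun_apply f1 e = 0" by blast
    have "f1 = blinfun_apply f1 u' *\<^sub>R f2"
    proof (rule blinfun_eqI)
      fix x
      have "blinfun_apply f2 (x - blinfun_apply f2 x *\<^sub>R u') = 0"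
        using u' by (simp add: blinfun.diff_right blinfun.scaleR_right)
      then have "blinfun_apply f1 (x - blinfun_apply f2 x *\<^sub>R u') = 0" by (rule K)
      then show "blinfun_apply f1 x = blinfun_apply (blinfun_apply f1 u' *\<^sub>R f2) x"
        by (simp add: blinfun.diff_right blinfun.scaleR_right blinfun.scaleR_left mult.commute)
    qed
    with i show False unfolding indep2_def by blast
  qed
  then obtain e where e: "blinfun_apply f2 e = 0" "blinfun_apply f1 e \<noteq> 0" by blast
  define e' where "e' = (1 / blinfun_apply f1 e) *\<^sub>R e"
  have "blinfun_apply f2 e' = 0" "blinfun_apply f1 e' = 1"
    using e by (simp_all add: e'_def blinfun.scaleR_right)
  then show ?thesis by blast
qed

lemma indep2_sym: "indep2 a b \<Longrightarrow> indep2 b a"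
  unfolding indep2_def by blast

lemma kernel_span:
  fixes f1 f2 h :: "'a::real_normed_vector \<Rightarrow>\<^sub>L real"
  assumes i: "indep2 f1 f2"
    and H: "\<And>k. blinfun_apply f1 k = 0 \<Longrightarrow> blinfun_apply f2 k = 0 \<Longrightarrow> blinfun_apply h k = 0"
  shows "h \<in> span {f1, f2}"
proof -
  obtain e1 where e1: "blinfun_apply f2 e1 = 0" "blinfun_apply f1 e1 = 1" using sep_functional[OF i] by blast
  obtain e2 where e2: "blinfun_apply f1 e2 = 0" "blinfun_apply f2 e2 = 1"
    using sep_functional[OF indep2_sym[OF i]] by blast
  have "h = blinfun_apply h e1 *\<^sub>R f1 + blinfun_apply h e2 *\<^sub>R f2"
  proof (rule blinfun_eqI)
    fix x
    define k where "k = x - blinfun_apply f1 x *\<^sub>R e1 - blinfun_apply f2 x *\<^sub>R e2"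
    have "blinfun_apply f1 k = 0" "blinfun_apply f2 k = 0"
      using e1 e2 by (simp_all add: k_def blinfun.diff_right blinfun.scaleR_right)
    then have hk: "blinfun_apply h k = 0" by (rule H)
    have "blinfun_apply h k = blinfun_apply h x - blinfun_apply f1 x * blinfun_apply h e1 - blinfun_apply f2 x * blinfun_apply h e2"
      by (simp add: k_def blinfun.diff_right blinfun.scaleR_right)
    with hk have "blinfun_apply h x = blinfun_apply f1 x * blinfun_apply h e1 + blinfun_apply f2 x * blinfun_apply h e2"
      by simp
    then show "blinfun_apply h x = blinfun_apply (blinfun_apply h e1 *\<^sub>R f1 + blinfun_apply h e2 *\<^sub>R f2) x"
      by (simp add: blinfun.add_left blinfun.scaleR_left mult.commute)
  qed
  also have "\<dots> \<in> span {f1, f2}" by (intro span_add span_scale span_base) auto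
  finally show ?thesis .
qed




lemma cramer:
  fixes A Bv C Dd p q :: real
  assumes d: "A * Dd - Bv * C \<noteq> 0"
  shows "p - ((p * Dd - Bv * q) / (A * Dd - Bv * C)) * A - ((A * q - C * p) / (A * Dd - Bv * C)) * Bv = 0"
    and "q - ((p * Dd - Bv * q) / (A * Dd - Bv * C)) * C - ((A * q - C * p) / (A * Dd - Bv * C)) * Dd = 0"
proof -
  define X where "X = A * Dd - Bv * C"
  have X: "X \<noteq> 0" using d by (simp add: X_def)
  have n1: "(p * Dd - Bv * q) * A + (A * q - C * p) * Bv = p * X" by (simp add: X_def algebra_simps)
  have n2: "(p * Dd - Bv * q) * C + (A * q - C * p) * Dd = q * X" by (simp add: X_def algebra_simps)
  have "(p * Dd - Bv * q) / X * A + (A * q - C * p) / X * Bv = ((p * Dd - Bv * q) * A + (A * q - C * p) * Bv) / X"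
    by (simp add: add_divide_distrib)
  also have "\<dots> = p" using n1 X by simp
  finally have e1: "(p * Dd - Bv * q) / X * A + (A * q - C * p) / X * Bv = p" .
  have "(p * Dd - Bv * q) / X * C + (A * q - C * p) / X * Dd = ((p * Dd - Bv * q) * C + (A * q - C * p) * Dd) / X"
    by (simp add: add_divide_distrib)
  also have "\<dots> = q" using n2 X by simp
  finally have e2: "(p * Dd - Bv * q) / X * C + (A * q - C * p) / X * Dd = q" .
  show "p - ((p * Dd - Bv * q) / (A * Dd - Bv * C)) * A - ((A * q - C * p) / (A * Dd - Bv * C)) * Bv = 0"
    using e1 unfolding X_def by linarith
  show "q - ((p * Dd - Bv * q) / (A * Dd - Bv * C)) * C - ((A * q - C * p) / (A * Dd - Bv * C)) * Dd = 0"
    using e2 unfolding X_def by linarith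
qed

lemma indep2_add:
  fixes x y :: "'a::real_vector"
  assumes i: "indep2 x y"
  shows "indep2 x (x + y)" "indep2 (x + y) y"
proof -
  have x0: "x \<noteq> 0" and y0: "y \<noteq> 0" using i unfolding indep2_def by (metis scaleR_zero_left)+
  have n1: "x + y \<noteq> c *\<^sub>R x" for c
  proof
    assume h: "x + y = c *\<^sub>R x"
    have "y = (x + y) - x" by simp
    also have "\<dots> = c *\<^sub>R x - x" by (simp only: h)
    also have "\<dots> = (c - 1) *\<^sub>R x" by (simp add: algebra_simps)
    finally show False using i unfolding indep2_def by blast
  qed
  have n4: "x + y \<noteq> c *\<^sub>R y" for c
  proof
    assume h: "x + y = c *\<^sub>R y"
    have "x = (x + y) - y" by simp
    also have "\<dots> = c *\<^sub>R y - y" by (simp only: h)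
    also have "\<dots> = (c - 1) *\<^sub>R y" by (simp add: algebra_simps)
    finally show False using i unfolding indep2_def by blast
  qed
  have n2: "x \<noteq> c *\<^sub>R (x + y)" for c
  proof
    assume h: "x = c *\<^sub>R (x + y)"
    show False
    proof (cases "c = 0")
      case True then show False using h x0 by simp
    next
      case c: False
      have "c *\<^sub>R y = c *\<^sub>R (x + y) - c *\<^sub>R x" by (simp add: scaleR_add_right)
      also have "\<dots> = x - c *\<^sub>R x" by (simp only: h[symmetric])
      finally have "c *\<^sub>R y = (1 - c) *\<^sub>R x" by (simp add: algebra_simps)
      then have "(1 / c) *\<^sub>R (c *\<^sub>R y) = (1 / c) *\<^sub>R ((1 - c) *\<^sub>R x)" by simp
      then have "y = ((1 - c) / c) *\<^sub>R x" using c by simp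
      then show False using i unfolding indep2_def by blast
    qed
  qed
  have n3: "y \<noteq> c *\<^sub>R (x + y)" for c
  proof
    assume h: "y = c *\<^sub>R (x + y)"
    show False
    proof (cases "c = 0")
      case True then show False using h y0 by simp
    next
      case c: False
      have "c *\<^sub>R x = c *\<^sub>R (x + y) - c *\<^sub>R y" by (simp add: scaleR_add_right)
      also have "\<dots> = y - c *\<^sub>R y" by (simp only: h[symmetric])
      finally have "c *\<^sub>R x = (1 - c) *\<^sub>R y" by (simp add: algebra_simps)
      then have "(1 / c) *\<^sub>R (c *\<^sub>R x) = (1 / c) *\<^sub>R ((1 - c) *\<^sub>R y)" by simp
      then have "x = ((1 - c) / c) *\<^sub>R y" using c by simp
      then show False using i unfolding indep2_def by blast
    qed
  qed
  show "indep2 x (x + y)" unfolding indep2_def using n1 n2 by blast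
  show "indep2 (x + y) y" unfolding indep2_def using n3 n4 by blast
qed




lemma dir1:
  fixes D :: "('a::banach \<Rightarrow>\<^sub>L real) set"
  assumes uc: "uniformly_convex TYPE('a)" and us: "uniformly_smooth TYPE('a)"
    and L: "\<forall>K::'a set. convex_cone K \<and> closed K \<longrightarrow> convex (polar K)"
    and Ds: "subspace D" and Dd: "dim D = 2"
  shows "subspace {x::'a. duality_map x \<in> D} \<and> dim {x::'a. duality_map x \<in> D} = 2"
proof -
  obtain B where B: "B \<subseteq> D" "independent B" "D \<subseteq> span B" "card B = dim D" by (rule basis_exists)
  then have "card B = 2" using Dd by simp
  then obtain f1 f2 where B12: "B = {f1, f2}" "f1 \<noteq> f2" unfolding card_2_iff by blast
  have spanB: "span {f1, f2} = D"
  proof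
    show "span {f1, f2} \<subseteq> D" using span_minimal[OF B(1) Ds] B12 by simp
    show "D \<subseteq> span {f1, f2}" using B(3) B12 by simp
  qed
  have i12: "indep2 f1 f2" by (rule indep_pair_indep2) (use B B12 in auto)
  define K where "K = {x::'a. blinfun_apply f1 x = 0 \<and> blinfun_apply f2 x = 0}"
  have Ksub: "subspace K" unfolding subspace_def K_def
    by (auto simp: blinfun.add_right blinfun.scaleR_right)
  have Kcl: "closed K" unfolding K_def by (intro closed_Collect_conj closed_Collect_eq continuous_intros)
  have Kcc: "convex_cone K"
  proof -
    have "K \<noteq> {}" using subspace_0[OF Ksub] by blast
    moreover have "convex K" by (rule subspace_imp_convex[OF Ksub])
    moreover have "conic K" unfolding conic_def using subspace_scale[OF Ksub] by blast
    ultimately show ?thesis unfolding convex_cone_def by blast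
  qed
  define E where "E = {x::'a. duality_map x \<in> D}"
  have EP: "E = polar K"
  proof (intro set_eqI iffI)
    fix x assume "x \<in> E"
    then have Jx: "duality_map x \<in> span {f1, f2}" using spanB by (simp add: E_def)
    have "\<forall>k\<in>K. blinfun_apply (duality_map x) k \<le> 0"
      using span_vanish[OF Jx] by (auto simp: K_def)
    then show "x \<in> polar K" using polar_char[OF uc us Kcc Kcl] by blast
  next
    fix x assume "x \<in> polar K"
    then have H: "\<forall>k\<in>K. blinfun_apply (duality_map x) k \<le> 0" using polar_char[OF uc us Kcc Kcl] by blast
    have "duality_map x \<in> span {f1, f2}"
    proof (rule kernel_span[OF i12])
      fix k assume "blinfun_apply f1 k = 0" "blinfun_apply f2 k = 0"
      then have "k \<in> K" "-k \<in> K" by (simp_all add: K_def blinfun.minus_right)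
      then have "blinfun_apply (duality_map x) k \<le> 0" "blinfun_apply (duality_map x) (-k) \<le> 0" using H by auto
      then show "blinfun_apply (duality_map x) k = 0" by (simp add: blinfun.minus_right)
    qed
    then show "x \<in> E" using spanB by (simp add: E_def)
  qed
  have Ecvx: "convex E" using L Kcc Kcl EP by simp
  have E0: "0 \<in> E" using J_zero[OF us] subspace_0[OF Ds] by (simp add: E_def)
  have Escale: "c *\<^sub>R x \<in> E" if "x \<in> E" for c x
    using that J_scale[OF us] subspace_scale[OF Ds] by (simp add: E_def)
  have Eadd: "x + y \<in> E" if "x \<in> E" "y \<in> E" for x y
  proof -
    have "(1/2) *\<^sub>R x + (1/2) *\<^sub>R y \<in> E" using convexD[OF Ecvx that, of "1/2" "1/2"] by simp
    then have "2 *\<^sub>R ((1/2) *\<^sub>R x + (1/2) *\<^sub>R y) \<in> E" by (rule Escale)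
    then show ?thesis by (simp add: scaleR_add_right)
  qed
  have Esub: "subspace E" unfolding subspace_def using E0 Eadd Escale by blast
  obtain x1 where x1: "duality_map x1 = f1" using J_surj[OF uc us] by blast
  obtain x2 where x2: "duality_map x2 = f2" using J_surj[OF uc us] by blast
  have x12E: "x1 \<in> E" "x2 \<in> E" using x1 x2 B B12 by (auto simp: E_def)
  have ix: "indep2 x1 x2"
    unfolding indep2_def
  proof (intro conjI allI notI)
    fix c assume h: "x2 = c *\<^sub>R x1"
    have "f2 = duality_map (c *\<^sub>R x1)" using x2 h by simp
    also have "\<dots> = c *\<^sub>R f1" using J_scale[OF us] x1 by simp
    finally show False using i12 unfolding indep2_def by blast
  next
    fix c assume h: "x1 = c *\<^sub>R x2"
    have "f1 = duality_map (c *\<^sub>R x2)" using x1 h by simp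
    also have "\<dots> = c *\<^sub>R f2" using J_scale[OF us] x2 by simp
    finally show False using i12 unfolding indep2_def by blast
  qed
  have spanE: "E = span {x1, x2}"
  proof
    show "span {x1, x2} \<subseteq> E" by (rule span_minimal) (use x12E Esub in auto)
    show "E \<subseteq> span {x1, x2}"
    proof (rule subsetI, rule ccontr)
      fix x assume xE: "x \<in> E" and nx: "x \<notin> span {x1, x2}"
      define A where "A = blinfun_apply f1 x1"
      define Bv where "Bv = blinfun_apply f1 x2"
      define C where "C = blinfun_apply f2 x1"
      define Dd where "Dd = blinfun_apply f2 x2"
      define p where "p = blinfun_apply f1 x"
      define q where "q = blinfun_apply f2 x"
      have A: "A = norm x1 ^ 2" using J_char(1)[OF us, of x1] x1 by (simp add: A_def)
      have Dd': "Dd = norm x2 ^ 2" using J_char(1)[OF us, of x2] x2 by (simp add: Dd_def)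
      have "blinfun_apply (duality_map x1) x2 * blinfun_apply (duality_map x2) x1 < norm x1 ^ 2 * norm x2 ^ 2"
        using J_delta[OF uc us, where x=x1 and y=x2] ix unfolding indep2_def by blast
      then have det: "A * Dd - Bv * C > 0" using A Dd' x1 x2 by (simp add: Bv_def C_def)
      define \<beta> where "\<beta> = (p * Dd - Bv * q) / (A * Dd - Bv * C)"
      define \<gamma> where "\<gamma> = (A * q - C * p) / (A * Dd - Bv * C)"
      define z where "z = x - \<beta> *\<^sub>R x1 - \<gamma> *\<^sub>R x2"
      have "blinfun_apply f1 z = p - \<beta> * A - \<gamma> * Bv"
        by (simp add: z_def p_def A_def Bv_def blinfun.diff_right blinfun.scaleR_right)
      then have z1: "blinfun_apply f1 z = 0" using cramer(1)[where A=A and Bv=Bv and C=C and Dd=Dd and p=p and q=q] det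
        by (simp add: \<beta>_def \<gamma>_def)
      have "blinfun_apply f2 z = q - \<beta> * C - \<gamma> * Dd"
        by (simp add: z_def q_def C_def Dd_def blinfun.diff_right blinfun.scaleR_right)
      then have z2: "blinfun_apply f2 z = 0" using cramer(2)[where A=A and Bv=Bv and C=C and Dd=Dd and p=p and q=q] det
        by (simp add: \<beta>_def \<gamma>_def)
      have zE: "z \<in> E" unfolding z_def
        by (intro subspace_diff[OF Esub] xE subspace_scale[OF Esub] x12E)
      have z0: "z \<noteq> 0"
      proof
        assume "z = 0"
        then have "x = \<beta> *\<^sub>R x1 + \<gamma> *\<^sub>R x2" by (simp add: z_def algebra_simps)
        moreover have "\<beta> *\<^sub>R x1 + \<gamma> *\<^sub>R x2 \<in> span {x1, x2}"
          by (intro span_add span_scale span_base) auto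
        ultimately show False using nx by simp
      qed
      have "duality_map z \<in> span {f1, f2}" using zE spanB by (simp add: E_def)
      then have "blinfun_apply (duality_map z) z = 0" by (rule span_vanish[OF _ z1 z2])
      moreover have "blinfun_apply (duality_map z) z = norm z ^ 2" by (rule J_char(1)[OF us])
      ultimately show False using z0 by simp
    qed
  qed
  have "dim E = 2"
    using indep2_pair[OF ix] by (simp add: spanE dim_eq_card_independent)
  then show ?thesis using Esub by (simp add: E_def)
qed

lemma dir2:
  fixes K :: "'a::banach set"
  assumes uc: "uniformly_convex TYPE('a)" and us: "uniformly_smooth TYPE('a)"
    and R: "\<forall>D :: ('a \<Rightarrow>\<^sub>L real) set. subspace D \<and> dim D = 2 \<longrightarrow>
             subspace {x::'a. duality_map x \<in> D} \<and> dim {x::'a. duality_map x \<in> D} = 2"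
    and K: "convex_cone K" "closed K"
  shows "convex (polar K)"
proof -
  have P: "x \<in> polar K \<longleftrightarrow> (\<forall>k\<in>K. blinfun_apply (duality_map x) k \<le> 0)" for x
    by (rule polar_char[OF uc us K])
  have Pscale: "c *\<^sub>R x \<in> polar K" if "x \<in> polar K" "c \<ge> 0" for c x
    using that P J_scale[OF us] by (auto simp: blinfun.scaleR_left mult_nonneg_nonpos)
  have Pdep: "x + y \<in> polar K" if xP: "x \<in> polar K" and yP: "y \<in> polar K" and h: "y = c *\<^sub>R x" for x y c
  proof (cases "1 + c \<ge> 0")
    case True
    then have "(1 + c) *\<^sub>R x \<in> polar K" by (rule Pscale[OF xP])
    then show ?thesis using h by (simp add: algebra_simps)
  next
    case False
    then have c: "c < -1" by simp
    have "((1 + c) / c) *\<^sub>R y = ((1 + c) / c * c) *\<^sub>R x" using h by simp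
    also have "(1 + c) / c * c = 1 + c" using c by simp
    also have "(1 + c) *\<^sub>R x = x + y" using h by (simp add: algebra_simps)
    finally have eq: "((1 + c) / c) *\<^sub>R y = x + y" .
    have "(1 + c) / c \<ge> 0" using c by (simp add: divide_nonpos_neg)
    then have "((1 + c) / c) *\<^sub>R y \<in> polar K" by (rule Pscale[OF yP])
    then show ?thesis using eq by simp
  qed
  have Padd: "x + y \<in> polar K" if xP: "x \<in> polar K" and yP: "y \<in> polar K" for x y
  proof (cases "indep2 x y")
    case False
    then obtain c where "y = c *\<^sub>R x \<or> x = c *\<^sub>R y" unfolding indep2_def by blast
    then show ?thesis
    proof
      assume "y = c *\<^sub>R x" then show ?thesis by (rule Pdep[OF xP yP])
    next
      assume "x = c *\<^sub>R y" then have "y + x \<in> polar K" by (rule Pdep[OF yP xP])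
      then show ?thesis by (simp add: add.commute)
    qed
  next
    case True
    define f where "f = duality_map x"
    define g where "g = duality_map y"
    have ifg: "indep2 f g"
      unfolding indep2_def
    proof (intro conjI allI notI)
      fix c assume "g = c *\<^sub>R f"
      then have "duality_map y = duality_map (c *\<^sub>R x)" using J_scale[OF us] by (simp add: f_def g_def)
      then have "y = c *\<^sub>R x" by (rule J_inj[OF uc us])
      then show False using True unfolding indep2_def by blast
    next
      fix c assume "f = c *\<^sub>R g"
      then have "duality_map x = duality_map (c *\<^sub>R y)" using J_scale[OF us] by (simp add: f_def g_def)
      then have "x = c *\<^sub>R y" by (rule J_inj[OF uc us])
      then show False using True unfolding indep2_def by blast
    qed
    define D where "D = span {f, g}"
    have Ds: "subspace D" by (simp add: D_def subspace_span)
    have Dd: "dim D = 2" using indep2_pair[OF ifg] by (simp add: D_def dim_eq_card_independent)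
    have Es: "subspace {x::'a. duality_map x \<in> D}" using R Ds Dd by blast
    have xyE: "x \<in> {x::'a. duality_map x \<in> D}" "y \<in> {x::'a. duality_map x \<in> D}"
      by (simp_all add: D_def f_def[symmetric] g_def[symmetric] span_base)
    have "x + y \<in> {x::'a. duality_map x \<in> D}" by (rule subspace_add[OF Es xyE])
    then have "duality_map (x + y) \<in> span {f, g}" by (simp add: D_def)
    then obtain a b where ab: "duality_map (x + y) = a *\<^sub>R f + b *\<^sub>R g" using span_pair by blast
    define z where "z = x + y"
    define A where "A = blinfun_apply f x"
    define Bv where "Bv = blinfun_apply f y"
    define C where "C = blinfun_apply g x"
    define Dd' where "Dd' = blinfun_apply g y"
    have A: "norm x ^ 2 = A" using J_char(1)[OF us, of x] by (simp add: A_def f_def)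
    have Dd'': "norm y ^ 2 = Dd'" using J_char(1)[OF us, of y] by (simp add: Dd'_def g_def)
    have Jzx: "blinfun_apply (duality_map z) x = a * A + b * C"
      using ab by (simp add: z_def A_def C_def blinfun.add_left blinfun.scaleR_left)
    have Jzy: "blinfun_apply (duality_map z) y = a * Bv + b * Dd'"
      using ab by (simp add: z_def Bv_def Dd'_def blinfun.add_left blinfun.scaleR_left)
    have nz: "norm z ^ 2 = (a * A + b * C) + (a * Bv + b * Dd')"
      using J_char(1)[OF us, of z] Jzx Jzy by (simp add: z_def blinfun.add_right)
    have fz: "blinfun_apply f z = A + Bv" by (simp add: z_def A_def Bv_def blinfun.add_right)
    have gz: "blinfun_apply g z = C + Dd'" by (simp add: z_def C_def Dd'_def blinfun.add_right)
    have dxy: "Bv * C < A * Dd'"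
      using J_delta[OF uc us, where x=x and y=y] True A Dd'' unfolding indep2_def
      by (simp add: Bv_def C_def f_def g_def)
    have dxz: "(A + Bv) * (a * A + b * C) < A * ((a * A + b * C) + (a * Bv + b * Dd'))"
    proof -
      have "blinfun_apply (duality_map x) z * blinfun_apply (duality_map z) x < norm x ^ 2 * norm z ^ 2"
        using J_delta[OF uc us, where x=x and y=z] indep2_add(1)[OF True] unfolding indep2_def z_def by blast
      then show ?thesis using fz Jzx A nz by (simp add: f_def)
    qed
    have dzy: "(a * Bv + b * Dd') * (C + Dd') < ((a * A + b * C) + (a * Bv + b * Dd')) * Dd'"
    proof -
      have "blinfun_apply (duality_map z) y * blinfun_apply (duality_map y) z < norm z ^ 2 * norm y ^ 2"
        using J_delta[OF uc us, where x=z and y=y] indep2_add(2)[OF True] unfolding indep2_def z_def by blast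
      then show ?thesis using gz Jzy Dd'' nz by (simp add: g_def)
    qed
    have eb: "A * ((a * A + b * C) + (a * Bv + b * Dd')) - (A + Bv) * (a * A + b * C) = b * (A * Dd' - Bv * C)"
      by (simp add: algebra_simps)
    have ea: "((a * A + b * C) + (a * Bv + b * Dd')) * Dd' - (a * Bv + b * Dd') * (C + Dd') = a * (A * Dd' - Bv * C)"
      by (simp add: algebra_simps)
    have X: "A * Dd' - Bv * C > 0" using dxy by simp
    have "b * (A * Dd' - Bv * C) > 0" using dxz eb by linarith
    then have b: "b > 0" using X by (simp add: zero_less_mult_iff)
    have "a * (A * Dd' - Bv * C) > 0" using dzy ea by linarith
    then have a: "a > 0" using X by (simp add: zero_less_mult_iff)
    have "\<forall>k\<in>K. blinfun_apply (duality_map (x + y)) k \<le> 0"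
    proof
      fix k assume k: "k \<in> K"
      have "blinfun_apply f k \<le> 0" "blinfun_apply g k \<le> 0" using xP yP k P by (auto simp: f_def g_def)
      then have "a * blinfun_apply f k + b * blinfun_apply g k \<le> 0"
        using a b by (simp add: add_nonpos_nonpos mult_nonneg_nonpos)
      then show "blinfun_apply (duality_map (x + y)) k \<le> 0"
        using ab by (simp add: blinfun.add_left blinfun.scaleR_left)
    qed
    then show ?thesis using P by blast
  qed
  show ?thesis
    unfolding convex_def
  proof (intro ballI allI impI)
    fix x y and u v :: real
    assume "x \<in> polar K" "y \<in> polar K" "0 \<le> u" "0 \<le> v" "u + v = 1"
    then show "u *\<^sub>R x + v *\<^sub>R y \<in> polar K" by (intro Padd Pscale) auto
  qed
qed

theorem theorem1:
  assumes "uniformly_convex TYPE('a::banach)"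
    and "uniformly_smooth TYPE('a)"
  shows "(\<forall>K::'a set. convex_cone K \<and> closed K \<longrightarrow> convex (polar K)) \<longleftrightarrow>
         (\<forall>D :: ('a \<Rightarrow>\<^sub>L real) set. subspace D \<and> dim D = 2 \<longrightarrow>
             subspace {x::'a. duality_map x \<in> D} \<and> dim {x::'a. duality_map x \<in> D} = 2)"
proof
  assume L: "\<forall>K::'a set. convex_cone K \<and> closed K \<longrightarrow> convex (polar K)"
  show "\<forall>D :: ('a \<Rightarrow>\<^sub>L real) set. subspace D \<and> dim D = 2 \<longrightarrow>
             subspace {x::'a. duality_map x \<in> D} \<and> dim {x::'a. duality_map x \<in> D} = 2"
    using dir1[OF assms L] by blast
next
  assume R: "\<forall>D :: ('a \<Rightarrow>\<^sub>L real) set. subspace D \<and> dim D = 2 \<longrightarrow>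
             subspace {x::'a. duality_map x \<in> D} \<and> dim {x::'a. duality_map x \<in> D} = 2"
  show "\<forall>K::'a set. convex_cone K \<and> closed K \<longrightarrow> convex (polar K)"
    using dir2[OF assms R] by blast
qed



end
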